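(* For all $\eta,\varepsilon>0$ and $c\in\mathbb N$ there exist $\eta'>0$ and $n_0$ such that the following holds for all $n\ge n_0$. Let $H$ be a $3$-graph of order $n$. Let $V_1,\dots,V_d$ be disjoint subsets of $V(H)$ with $2\le d\le4$, each $(c,\eta)$-closed in $H$. Let $a_1,\dots,a_d$ be non-negative integers with $a_1\ge1$ and $\sum_i a_i=4$. Suppose there are at least $\varepsilon n^4$ copies $F$ of $K_4^-$ in $H$ with $|V(F)\cap V_i|=a_i$ for all $i\in[d]$, and at least $\varepsilon n^4$ copies $F'$ of $K_4^-$ in $H$ with $|V(F')\cap V_1|=a_1-1$, $|V(F')\cap V_2|=a_2+1$ and $|V(F')\cap V_j|=a_j$ for all $3\le j\le d$. Then $V_1\cup V_2$ is $(5c+1,\eta')$-closed in $H$.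
   Context: $K_4^-$ is the $3$-graph with $4$ vertices and $3$ edges; copies are counted as $4$-subsets of $V(H)$ spanning a (not necessarily induced) copy. A $K_4^-$-factor is a set of vertex-disjoint copies covering all vertices. Let $H$ be a $3$-graph of order $n$. For $c\in\mathbb N$, a set $S\subseteq V(H)$ is an $(x,y)$-connector of length $c$ if $S\cap\{x,y\}=\emptyset$, $|S|=4c-1$, and both $H[S\cup\{x\}]$ and $H[S\cup\{y\}]$ contain $K_4^-$-factors. Vertices $x,y$ are $(c,\eta)$-close if there are at least $\eta n^{4c-1}$ $(x,y)$-connectors of length $c$ in $H$. A set $U\subseteq V(H)$ is $(c,\eta)$-closed in $H$ if every two vertices of $U$ are $(c,\eta)$-close in $H$. *)

theory Defs
  imports Complex_Main "HOL-Library.Disjoint_Sets"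
begin

definition three_graph :: "'a set \<Rightarrow> 'a set set \<Rightarrow> bool" where
  "three_graph VH EH \<longleftrightarrow> finite VH \<and> (\<forall>e\<in>EH. e \<subseteq> VH \<and> card e = 3)"

text \<open>A 4-subset S of VH spans a (not necessarily induced) copy of K4^-:
  at least 3 of its 3-subsets are edges.\<close>
definition K4m_copy :: "'a set \<Rightarrow> 'a set set \<Rightarrow> 'a set \<Rightarrow> bool" where
  "K4m_copy VH EH S \<longleftrightarrow> S \<subseteq> VH \<and> card S = 4 \<and> card {e\<in>EH. e \<subseteq> S} \<ge> 3"

definition has_K4m_factor :: "'a set \<Rightarrow> 'a set set \<Rightarrow> 'a set \<Rightarrow> bool" where
  "has_K4m_factor VH EH W \<longleftrightarrow>
     (\<exists>P. disjoint P \<and> \<Union>P = W \<and> (\<forall>F\<in>P. K4m_copy VH EH F))"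

definition connector :: "'a set \<Rightarrow> 'a set set \<Rightarrow> nat \<Rightarrow> 'a \<Rightarrow> 'a \<Rightarrow> 'a set \<Rightarrow> bool" where
  "connector VH EH c x y S \<longleftrightarrow> S \<subseteq> VH \<and> x \<notin> S \<and> y \<notin> S \<and> card S = 4 * c - 1 \<and>
     has_K4m_factor VH EH (insert x S) \<and> has_K4m_factor VH EH (insert y S)"

definition close :: "'a set \<Rightarrow> 'a set set \<Rightarrow> nat \<Rightarrow> real \<Rightarrow> 'a \<Rightarrow> 'a \<Rightarrow> bool" where
  "close VH EH c \<eta> x y \<longleftrightarrow>
     real (card {S. connector VH EH c x y S}) \<ge> \<eta> * real (card VH) ^ (4 * c - 1)"

definition closed :: "'a set \<Rightarrow> 'a set set \<Rightarrow> nat \<Rightarrow> real \<Rightarrow> 'a set \<Rightarrow> bool" where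
  "closed VH EH c \<eta> U \<longleftrightarrow> (\<forall>x\<in>U. \<forall>y\<in>U. x \<noteq> y \<longrightarrow> close VH EH c \<eta> x y)"

end

theory Submission
  imports Defs
begin

lemma hf_empty: "has_K4m_factor VH EH {}"
  unfolding has_K4m_factor_def by (rule exI[of _ "{}"]) (simp add: disjoint_def)

lemma hf_single: "K4m_copy VH EH F \<Longrightarrow> has_K4m_factor VH EH F"
  unfolding has_K4m_factor_def by (rule exI[of _ "{F}"]) (simp add: disjoint_def)

lemma hf_union:
  assumes "has_K4m_factor VH EH A" "has_K4m_factor VH EH B" "A \<inter> B = {}"
  shows "has_K4m_factor VH EH (A \<union> B)"
proof -
  obtain P where P: "disjoint P" "\<Union>P = A" "\<forall>F\<in>P. K4m_copy VH EH F"
    using assms(1) unfolding has_K4m_factor_def by blast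
  obtain Q where Q: "disjoint Q" "\<Union>Q = B" "\<forall>F\<in>Q. K4m_copy VH EH F"
    using assms(2) unfolding has_K4m_factor_def by blast
  have "disjoint (P \<union> Q)"
  proof (rule disjointI)
    fix a b assume ab: "a \<in> P \<union> Q" "b \<in> P \<union> Q" "a \<noteq> b"
    show "a \<inter> b = {}"
    proof (cases "a \<in> P")
      case True
      show ?thesis
      proof (cases "b \<in> P")
        case True thus ?thesis using \<open>a \<in> P\<close> ab P(1) unfolding disjoint_def by blast
      next
        case False hence "b \<in> Q" using ab by blast
        thus ?thesis using \<open>a \<in> P\<close> P(2) Q(2) assms(3) by blast
      qed
    next
      case False hence aQ: "a \<in> Q" using ab by blast
      show ?thesis
      proof (cases "b \<in> Q")
        case True thus ?thesis using aQ ab Q(1) unfolding disjoint_def by blast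
      next
        case False hence "b \<in> P" using ab by blast
        thus ?thesis using aQ P(2) Q(2) assms(3) by blast
      qed
    qed
  qed
  thus ?thesis unfolding has_K4m_factor_def using P Q
    by (intro exI[of _ "P \<union> Q"]) auto
qed

lemma avoid_count:
  assumes fin: "finite VH" and C: "\<CC> \<subseteq> {C. C \<subseteq> VH \<and> card C = k}" and k: "k \<ge> 1" and W: "finite W"
  shows "real (card \<CC>) - real (card W) * real (card VH) ^ (k - 1) \<le> real (card {C\<in>\<CC>. C \<inter> W = {}})"
proof -
  have "\<CC> \<subseteq> Pow VH" using C by blast
  hence finC: "finite \<CC>" by (rule finite_subset) (simp add: fin)
  have split: "\<CC> = {C\<in>\<CC>. C \<inter> W = {}} \<union> {C\<in>\<CC>. C \<inter> W \<noteq> {}}" by blast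
  have "card \<CC> = card {C\<in>\<CC>. C \<inter> W = {}} + card {C\<in>\<CC>. C \<inter> W \<noteq> {}}"
    by (subst split) (rule card_Un_disjoint, use finC in auto)
  moreover have "card {C\<in>\<CC>. C \<inter> W \<noteq> {}} \<le> card W * card VH ^ (k - 1)"
  proof -
    have sub: "{C\<in>\<CC>. C \<inter> W \<noteq> {}} \<subseteq> (\<Union>v\<in>W. {C. C \<subseteq> VH \<and> card C = k \<and> v \<in> C})"
      using C by blast
    have each: "card {C. C \<subseteq> VH \<and> card C = k \<and> v \<in> C} \<le> card VH ^ (k - 1)" for v
    proof -
      have inj: "inj_on (\<lambda>C. C - {v}) {C. C \<subseteq> VH \<and> card C = k \<and> v \<in> C}"
        by (rule inj_onI) blast
      have img: "(\<lambda>C. C - {v}) ` {C. C \<subseteq> VH \<and> card C = k \<and> v \<in> C} \<subseteq> {B. B \<subseteq> VH \<and> card B = k - 1}"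
      proof
        fix B assume "B \<in> (\<lambda>C. C - {v}) ` {C. C \<subseteq> VH \<and> card C = k \<and> v \<in> C}"
        then obtain C where "C \<subseteq> VH" "card C = k" "v \<in> C" "B = C - {v}" by blast
        moreover have "finite C" using \<open>C \<subseteq> VH\<close> fin finite_subset by blast
        ultimately show "B \<in> {B. B \<subseteq> VH \<and> card B = k - 1}" by auto
      qed
      have "card {C. C \<subseteq> VH \<and> card C = k \<and> v \<in> C} = card ((\<lambda>C. C - {v}) ` {C. C \<subseteq> VH \<and> card C = k \<and> v \<in> C})"
        using inj by (simp add: card_image)
      also have "\<dots> \<le> card {B. B \<subseteq> VH \<and> card B = k - 1}"
        by (rule card_mono[OF _ img]) (use fin in simp)
      also have "\<dots> = card VH choose (k - 1)" using fin by (rule n_subsets)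
      also have "\<dots> \<le> card VH ^ (k - 1)"
        by (cases "k - 1 \<le> card VH") (auto simp: binomial_le_pow binomial_eq_0)
      finally show ?thesis .
    qed
    have "card {C\<in>\<CC>. C \<inter> W \<noteq> {}} \<le> card (\<Union>v\<in>W. {C. C \<subseteq> VH \<and> card C = k \<and> v \<in> C})"
      by (rule card_mono[OF _ sub]) (use fin W in auto)
    also have "\<dots> \<le> (\<Sum>v\<in>W. card {C. C \<subseteq> VH \<and> card C = k \<and> v \<in> C})" using W by (rule card_UN_le)
    also have "\<dots> \<le> (\<Sum>v\<in>W. card VH ^ (k - 1))" by (rule sum_mono) (rule each)
    also have "\<dots> = card W * card VH ^ (k - 1)" by simp
    finally show ?thesis .
  qed
  hence "real (card {C\<in>\<CC>. C \<inter> W \<noteq> {}}) \<le> real (card W) * real (card VH) ^ (k - 1)"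
    by (metis of_nat_le_iff of_nat_mult of_nat_power)
  ultimately show ?thesis by simp
qed

lemma ext_count:
  fixes \<AA> :: "'a set set" and \<BB> :: "'a set \<Rightarrow> 'a set set"
  assumes finA: "finite \<AA>"
    and Ak: "\<And>A. A \<in> \<AA> \<Longrightarrow> card A = k \<and> finite A"
    and finB: "\<And>A. A \<in> \<AA> \<Longrightarrow> finite (\<BB> A)"
    and Bm: "\<And>A B. A \<in> \<AA> \<Longrightarrow> B \<in> \<BB> A \<Longrightarrow> A \<inter> B = {} \<and> card B = m \<and> finite B"
    and beta: "\<And>A. A \<in> \<AA> \<Longrightarrow> \<beta> \<le> real (card (\<BB> A))"
  shows "real (card \<AA>) * \<beta> \<le> real (card {A \<union> B | A B. A \<in> \<AA> \<and> B \<in> \<BB> A}) * real ((k + m) choose k)"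
proof -
  let ?S = "Sigma \<AA> \<BB>"
  let ?I = "{A \<union> B | A B. A \<in> \<AA> \<and> B \<in> \<BB> A}"
  have finS: "finite ?S" using finA finB by (rule finite_SigmaI)
  have I_eq: "?I = (\<lambda>(A,B). A \<union> B) ` ?S" by auto
  have finI: "finite ?I" using finS I_eq by simp
  have "real (card \<AA>) * \<beta> \<le> (\<Sum>A\<in>\<AA>. real (card (\<BB> A)))"
    using beta by (rule sum_bounded_below)
  also have "\<dots> = real (card ?S)" using finA finB by (simp add: card_SigmaI)
  also have "card ?S \<le> card (Sigma ?I (\<lambda>U. {A. A \<subseteq> U \<and> card A = k}))"
  proof (rule card_inj_on_le[where f = "\<lambda>(A,B). (A \<union> B, A)"])
    show "inj_on (\<lambda>(A,B). (A \<union> B, A)) ?S"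
    proof (rule inj_onI)
      fix p q assume p: "p \<in> ?S" and q: "q \<in> ?S" and e: "(\<lambda>(A,B). (A \<union> B, A)) p = (\<lambda>(A,B). (A \<union> B, A)) q"
      obtain A B where pAB: "p = (A,B)" "A \<in> \<AA>" "B \<in> \<BB> A" using p by blast
      obtain A' B' where qAB: "q = (A',B')" "A' \<in> \<AA>" "B' \<in> \<BB> A'" using q by blast
      have h: "A \<union> B = A' \<union> B'" "A = A'" using e pAB qAB by auto
      have "B = (A \<union> B) - A" using Bm[OF pAB(2,3)] by blast
      also have "\<dots> = B'" using Bm[OF qAB(2,3)] h by blast
      finally show "p = q" using pAB qAB h by simp
    qed
    show "(\<lambda>(A,B). (A \<union> B, A)) ` ?S \<subseteq> Sigma ?I (\<lambda>U. {A. A \<subseteq> U \<and> card A = k})"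
      using Ak by force
    show "finite (Sigma ?I (\<lambda>U. {A. A \<subseteq> U \<and> card A = k}))"
    proof (rule finite_SigmaI[OF finI])
      fix U assume "U \<in> ?I"
      then obtain A B where "U = A \<union> B" "A \<in> \<AA>" "B \<in> \<BB> A" by blast
      hence "finite U" using Ak Bm by blast
      thus "finite {A. A \<subseteq> U \<and> card A = k}" by simp
    qed
  qed
  also have "card (Sigma ?I (\<lambda>U. {A. A \<subseteq> U \<and> card A = k})) = (\<Sum>U\<in>?I. card {A. A \<subseteq> U \<and> card A = k})"
  proof (rule card_SigmaI[OF finI], rule ballI)
    fix U assume "U \<in> ?I"
    then obtain A B where "U = A \<union> B" "A \<in> \<AA>" "B \<in> \<BB> A" by blast
    hence "finite U" using Ak Bm by blast
    thus "finite {A. A \<subseteq> U \<and> card A = k}" by simp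
  qed
  also have "\<dots> = (\<Sum>U\<in>?I. (k + m) choose k)"
  proof (rule sum.cong[OF refl])
    fix U assume "U \<in> ?I"
    then obtain A B where U: "U = A \<union> B" "A \<in> \<AA>" "B \<in> \<BB> A" by blast
    hence fU: "finite U" using Ak Bm by blast
    have "card U = k + m" using U Ak[OF U(2)] Bm[OF U(2,3)] by (simp add: card_Un_disjoint)
    thus "card {A. A \<subseteq> U \<and> card A = k} = (k + m) choose k" using n_subsets[OF fU] by simp
  qed
  also have "\<dots> = card ?I * ((k + m) choose k)" by simp
  finally show ?thesis by simp
qed

definition fam :: "'a set \<Rightarrow> 'a set set \<Rightarrow> nat \<Rightarrow> 'a set \<Rightarrow> ('a \<times> 'a) list \<Rightarrow> 'a set set" where
  "fam VH EH c Z L = {D. D \<subseteq> VH \<and> D \<inter> Z = {} \<and> card D = length L * (4*c-1) \<and>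
     has_K4m_factor VH EH (D \<union> fst ` set L) \<and> has_K4m_factor VH EH (D \<union> snd ` set L)}"

lemma fam_finite: "finite VH \<Longrightarrow> finite (fam VH EH c Z L)"
proof -
  assume f: "finite VH"
  have "fam VH EH c Z L \<subseteq> Pow VH" unfolding fam_def by blast
  thus ?thesis by (rule finite_subset) (simp add: f)
qed

lemma conn_finite: "finite VH \<Longrightarrow> finite {C. connector VH EH c p q C \<and> P C}"
proof -
  assume f: "finite VH"
  have "{C. connector VH EH c p q C \<and> P C} \<subseteq> Pow VH" unfolding connector_def by blast
  thus ?thesis by (rule finite_subset) (simp add: f)
qed

lemma fam_count:
  fixes \<eta> :: real
  assumes eta: "\<eta> > 0" and c: "c \<ge> 1"
  shows "\<exists>\<kappa>>0. \<exists>N::nat. \<forall>(VH::'a set) EH Z L. finite VH \<and> card VH \<ge> N \<and> length L = l \<and> finite Z \<and> card Z \<le> z \<and>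
     (\<forall>(p,q)\<in>set L. close VH EH c \<eta> p q) \<and> fst ` set L \<union> snd ` set L \<subseteq> Z \<and>
     distinct (map fst L) \<and> distinct (map snd L) \<longrightarrow>
     \<kappa> * real (card VH) ^ (l * (4*c-1)) \<le> real (card (fam VH EH c Z L))"
proof (induction l)
  case 0
  show ?case
  proof (intro exI[of _ "1::real"] conjI exI[of _ "0::nat"] allI impI)
    fix VH :: "'a set" and EH Z L
    assume h: "finite VH \<and> 0 \<le> card VH \<and> length L = 0 \<and> finite Z \<and> card Z \<le> z \<and>
     (\<forall>(p,q)\<in>set L. close VH EH c \<eta> p q) \<and> fst ` set L \<union> snd ` set L \<subseteq> Z \<and>
     distinct (map fst L) \<and> distinct (map snd L)"
    have "fam VH EH c Z L = {{}}"
    proof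
      show "fam VH EH c Z L \<subseteq> {{}}"
      proof
        fix D assume "D \<in> fam VH EH c Z L"
        hence "D \<subseteq> VH" "card D = 0" using h by (auto simp: fam_def)
        thus "D \<in> {{}}" using h finite_subset by fastforce
      qed
      show "{{}} \<subseteq> fam VH EH c Z L" using h by (simp add: fam_def hf_empty)
    qed
    thus "1 * real (card VH) ^ (0 * (4 * c - 1)) \<le> real (card (fam VH EH c Z L))" by simp
  qed simp
next
  case (Suc l)
  then obtain \<kappa>' N' where kp: "\<kappa>' > 0" and IH: "\<forall>(VH::'a set) EH Z L. finite VH \<and> card VH \<ge> N' \<and> length L = l \<and> finite Z \<and> card Z \<le> z \<and>
     (\<forall>(p,q)\<in>set L. close VH EH c \<eta> p q) \<and> fst ` set L \<union> snd ` set L \<subseteq> Z \<and>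
     distinct (map fst L) \<and> distinct (map snd L) \<longrightarrow>
     \<kappa>' * real (card VH) ^ (l * (4*c-1)) \<le> real (card (fam VH EH c Z L))" by blast
  define k where "k = 4*c-1"
  have k1: "k \<ge> 1" using c by (simp add: k_def)
  define B where "B = (l*k + k) choose (l*k)"
  have Bpos: "B > 0" by (simp add: B_def)
  define N where "N = max N' (nat \<lceil>2 * (real z + real (l*k)) / \<eta>\<rceil>)"
  show ?case
  proof (intro exI[of _ "\<kappa>' * (\<eta>/2) / real B"] conjI exI[of _ N] allI impI)
    show "\<kappa>' * (\<eta>/2) / real B > 0" using kp eta Bpos by simp
    fix VH :: "'a set" and EH Z L
    assume h: "finite VH \<and> N \<le> card VH \<and> length L = Suc l \<and> finite Z \<and> card Z \<le> z \<and>
     (\<forall>(p,q)\<in>set L. close VH EH c \<eta> p q) \<and> fst ` set L \<union> snd ` set L \<subseteq> Z \<and>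
     distinct (map fst L) \<and> distinct (map snd L)"
    from h have fin: "finite VH" and hN: "N \<le> card VH" and hl: "length L = Suc l" and hZ: "finite Z"
      and hz: "card Z \<le> z" and hcl: "\<forall>(p,q)\<in>set L. close VH EH c \<eta> p q"
      and hsub: "fst ` set L \<union> snd ` set L \<subseteq> Z" and hd1: "distinct (map fst L)" and hd2: "distinct (map snd L)"
      by blast+
    obtain p q L' where L: "L = (p,q) # L'" using hl by (cases L) auto
    have lenL: "length L' = l" using hl L by simp
    define n where "n = card VH"
    have nN': "N' \<le> n" using hN by (simp add: n_def N_def)
    have nbig: "2 * (real z + real (l*k)) / \<eta> \<le> real n"
    proof -
      have "nat \<lceil>2 * (real z + real (l*k)) / \<eta>\<rceil> \<le> n" using hN by (simp add: n_def N_def)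
      thus ?thesis by linarith
    qed
    have sL: "set L' \<subseteq> set L" using L by auto
    have pre: "finite VH \<and> N' \<le> card VH \<and> length L' = l \<and> finite Z \<and> card Z \<le> z \<and>
     (\<forall>(p,q)\<in>set L'. close VH EH c \<eta> p q) \<and> fst ` set L' \<union> snd ` set L' \<subseteq> Z \<and>
     distinct (map fst L') \<and> distinct (map snd L')"
    proof (intro conjI)
      show "\<forall>(p,q)\<in>set L'. close VH EH c \<eta> p q" using hcl sL by blast
      show "fst ` set L' \<union> snd ` set L' \<subseteq> Z" using hsub sL by blast
      show "distinct (map fst L')" using hd1 L by simp
      show "distinct (map snd L')" using hd2 L by simp
    qed (simp_all only: fin lenL hZ hz nN'[unfolded n_def] simp_thms)
    have IH': "\<kappa>' * real n ^ (l * k) \<le> real (card (fam VH EH c Z L'))"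
      using IH[rule_format, OF pre] by (simp add: n_def k_def)
    have clpq: "close VH EH c \<eta> p q" using hcl L by simp
    have pZ: "p \<in> Z" "q \<in> Z" using hsub L by auto
    have pn: "p \<notin> fst ` set L'" "q \<notin> snd ` set L'" using hd1 hd2 L by auto
    have fs: "\<And>X. X \<subseteq> VH \<Longrightarrow> finite X" using fin by (rule rev_finite_subset)
    let ?A = "fam VH EH c Z L'"
    let ?B = "\<lambda>D. {C. connector VH EH c p q C \<and> C \<inter> (Z \<union> D) = {}}"
    let ?I = "{A \<union> B | A B. A \<in> ?A \<and> B \<in> ?B A}"
    have finA: "finite ?A" using fin by (rule fam_finite)
    have "real (card ?A) * ((\<eta>/2) * real n ^ k) \<le> real (card ?I) * real ((l*k + k) choose (l*k))"
    proof (rule ext_count[OF finA])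
      fix A assume "A \<in> ?A"
      thus "card A = l*k \<and> finite A" using lenL fs by (simp add: fam_def k_def)
    next
      fix A assume "A \<in> ?A"
      show "finite (?B A)" using fin by (rule conn_finite)
    next
      fix A C assume "A \<in> ?A" "C \<in> ?B A"
      thus "A \<inter> C = {} \<and> card C = k \<and> finite C" using fs
        by (auto simp: connector_def k_def)
    next
      fix D assume D: "D \<in> ?A"
      have Dc: "card D = l * k" "finite D" using D lenL fs by (auto simp: fam_def k_def)
      have fW: "finite (Z \<union> D)" using hZ Dc by simp
      have cW: "card (Z \<union> D) \<le> z + l*k" using card_Un_le[of Z D] hz Dc by simp
      have av: "real (card {C. connector VH EH c p q C}) - real (card (Z \<union> D)) * real n ^ (k - 1)
          \<le> real (card {C\<in>{C. connector VH EH c p q C}. C \<inter> (Z \<union> D) = {}})"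
        unfolding n_def by (rule avoid_count[OF fin _ k1 fW]) (auto simp: connector_def k_def)
      have cl: "\<eta> * real n ^ k \<le> real (card {C. connector VH EH c p q C})"
        using clpq by (simp add: close_def n_def k_def)
      have nk: "real n ^ k = real n * real n ^ (k - 1)" using k1
        by (metis Suc_diff_le diff_Suc_1 power_Suc)
      have "real (card (Z \<union> D)) * real n ^ (k - 1) \<le> (real z + real (l*k)) * real n ^ (k - 1)"
      proof (rule mult_right_mono)
        show "real (card (Z \<union> D)) \<le> real z + real (l*k)" using cW
          by (metis of_nat_add of_nat_le_iff)
      qed simp
      also have "\<dots> \<le> (\<eta>/2 * real n) * real n ^ (k - 1)"
      proof (rule mult_right_mono)
        show "real z + real (l*k) \<le> \<eta>/2 * real n" using nbig eta by (simp add: field_simps)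
      qed simp
      finally have "real (card (Z \<union> D)) * real n ^ (k - 1) \<le> \<eta>/2 * real n ^ k" using nk by simp
      thus "\<eta>/2 * real n ^ k \<le> real (card (?B D))" using av cl by simp
    qed
    moreover have "?I \<subseteq> fam VH EH c Z L"
    proof
      fix S assume "S \<in> ?I"
      then obtain D C where S: "S = D \<union> C" and D: "D \<in> ?A" and C: "connector VH EH c p q C" "C \<inter> (Z \<union> D) = {}" by blast
      have Dp: "D \<subseteq> VH" "D \<inter> Z = {}" "card D = l * k" "has_K4m_factor VH EH (D \<union> fst ` set L')"
          "has_K4m_factor VH EH (D \<union> snd ` set L')" using D lenL by (auto simp: fam_def k_def)
      have Cp: "C \<subseteq> VH" "p \<notin> C" "q \<notin> C" "card C = k" "has_K4m_factor VH EH (insert p C)"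
          "has_K4m_factor VH EH (insert q C)" using C by (auto simp: connector_def k_def)
      have fD: "finite D" "finite C" using Dp Cp fs by auto
      have sub: "fst ` set L' \<subseteq> Z" "snd ` set L' \<subseteq> Z" using hsub L by auto
      have f1: "has_K4m_factor VH EH ((D \<union> fst ` set L') \<union> insert p C)"
        by (rule hf_union[OF Dp(4) Cp(5)]) (use pZ pn sub Dp(2) C(2) in blast)
      have f2: "has_K4m_factor VH EH ((D \<union> snd ` set L') \<union> insert q C)"
        by (rule hf_union[OF Dp(5) Cp(6)]) (use pZ pn sub Dp(2) C(2) in blast)
      have DC: "D \<inter> C = {}" using C(2) by blast
      have cDC: "card (D \<union> C) = length L * (4*c-1)" using card_Un_disjoint[OF fD DC] Dp(3) Cp(4) hl
        by (simp add: k_def)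
      have e1: "(D \<union> fst ` set L') \<union> insert p C = D \<union> C \<union> fst ` set L" using L by auto
      have e2: "(D \<union> snd ` set L') \<union> insert q C = D \<union> C \<union> snd ` set L" using L by auto
      have "D \<union> C \<subseteq> VH" using Dp(1) Cp(1) by blast
      moreover have "(D \<union> C) \<inter> Z = {}" using Dp(2) C(2) by blast
      ultimately show "S \<in> fam VH EH c Z L" unfolding fam_def mem_Collect_eq S
        using cDC f1 f2 e1 e2 by simp
    qed
    moreover have "finite (fam VH EH c Z L)" using fin by (rule fam_finite)
    ultimately have cI0: "real (card ?A) * ((\<eta>/2) * real n ^ k) \<le> real (card ?I) * real B"
      and IF: "card ?I \<le> card (fam VH EH c Z L)" unfolding B_def by (auto intro: card_mono)
    have "real (card ?I) * real B \<le> real (card (fam VH EH c Z L)) * real B"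
      using IF by (intro mult_right_mono) auto
    with cI0 have cI: "real (card ?A) * ((\<eta>/2) * real n ^ k) \<le> real (card (fam VH EH c Z L)) * real B"
      by linarith
    have "\<kappa>' * real n ^ (l * k) * ((\<eta>/2) * real n ^ k) \<le> real (card ?A) * ((\<eta>/2) * real n ^ k)"
      using IH' eta by (intro mult_right_mono) auto
    with cI have "\<kappa>' * (\<eta>/2) * real n ^ (Suc l * k) \<le> real (card (fam VH EH c Z L)) * real B"
      by (simp add: power_add algebra_simps)
    thus "\<kappa>' * (\<eta>/2) / real B * real (card VH) ^ (Suc l * (4 * c - 1)) \<le> real (card (fam VH EH c Z L))"
      using Bpos by (simp add: n_def k_def field_simps)
  qed
qed

lemma match_exists:
  assumes fA: "finite A" and fB: "finite B"
    and cA: "A \<subseteq> (\<Union>j\<in>J. V j)" and cB: "B \<subseteq> (\<Union>j\<in>J. V j)"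
    and disj: "\<forall>i\<in>J. \<forall>j\<in>J. i \<noteq> j \<longrightarrow> V i \<inter> V j = {}"
    and cards: "\<forall>j\<in>J. card (A \<inter> V j) = card (B \<inter> V j)"
  shows "\<exists>h. inj_on h A \<and> h ` A = B \<and> (\<forall>p\<in>A. \<exists>j\<in>J. p \<in> V j \<and> h p \<in> V j)"
proof -
  have "\<forall>j\<in>J. \<exists>f. bij_betw f (A \<inter> V j) (B \<inter> V j)"
  proof
    fix j assume "j \<in> J"
    thus "\<exists>f. bij_betw f (A \<inter> V j) (B \<inter> V j)"
      using cards fA fB by (intro finite_same_card_bij) auto
  qed
  then obtain f where f: "\<And>j. j \<in> J \<Longrightarrow> bij_betw (f j) (A \<inter> V j) (B \<inter> V j)" by metis
  define cl where "cl p = (SOME j. j \<in> J \<and> p \<in> V j)" for p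
  have clA: "cl p \<in> J \<and> p \<in> V (cl p)" if "p \<in> A \<union> B" for p
  proof -
    have "\<exists>j. j \<in> J \<and> p \<in> V j" using that cA cB by blast
    thus ?thesis unfolding cl_def by (rule someI_ex)
  qed
  have cl_uniq: "cl p = j" if "p \<in> A \<union> B" "j \<in> J" "p \<in> V j" for p j
    using clA[OF that(1)] that disj by blast
  define h where "h p = f (cl p) p" for p
  have hV: "h p \<in> B \<inter> V (cl p)" if "p \<in> A" for p
  proof -
    have "p \<in> A \<inter> V (cl p)" using clA that by blast
    thus ?thesis unfolding h_def using f clA that bij_betwE by blast
  qed
  have "inj_on h A"
  proof (rule inj_onI)
    fix p q assume p: "p \<in> A" and q: "q \<in> A" and e: "h p = h q"
    have hp: "h p \<in> V (cl p)" "h q \<in> V (cl q)" using hV p q by blast+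
    have cpq: "cl p = cl q"
    proof (rule ccontr)
      assume ne: "cl p \<noteq> cl q"
      have "cl p \<in> J" "cl q \<in> J" using clA[of p] clA[of q] p q by blast+
      hence "V (cl p) \<inter> V (cl q) = {}" using disj[rule_format, of "cl p" "cl q"] ne by blast
      moreover have "h q \<in> V (cl p) \<inter> V (cl q)" using hp e by simp
      ultimately show False by simp
    qed
    have pq: "p \<in> A \<inter> V (cl p)" "q \<in> A \<inter> V (cl p)" using clA[of p] clA[of q] p q cpq by auto
    have "inj_on (f (cl p)) (A \<inter> V (cl p))" using f[of "cl p"] clA[of p] p by (simp add: bij_betw_def)
    moreover have "f (cl p) p = f (cl p) q" using e cpq unfolding h_def by simp
    ultimately show "p = q" using pq by (rule inj_onD)
  qed
  moreover have "h ` A = B"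
  proof
    show "h ` A \<subseteq> B" using hV by blast
    show "B \<subseteq> h ` A"
    proof
      fix b assume b: "b \<in> B"
      have j: "cl b \<in> J" "b \<in> V (cl b)" using clA b by auto
      have "b \<in> f (cl b) ` (A \<inter> V (cl b))" using f[OF j(1)] b j(2) by (simp add: bij_betw_def)
      then obtain p where p: "p \<in> A \<inter> V (cl b)" "f (cl b) p = b" by (rule imageE) (rule that, assumption, simp)
      have "cl p = cl b" using cl_uniq[of p "cl b"] p j by blast
      thus "b \<in> h ` A" using p unfolding h_def by force
    qed
  qed
  moreover have "\<forall>p\<in>A. \<exists>j\<in>J. p \<in> V j \<and> h p \<in> V j" using hV clA by blast
  ultimately show ?thesis by (intro exI[of _ h] conjI)
qed


lemma cover:
  assumes fF: "finite F" and fJ: "finite J"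
    and disj: "\<forall>i\<in>J. \<forall>j\<in>J. i \<noteq> j \<longrightarrow> V i \<inter> V j = {}"
    and cs: "(\<Sum>j\<in>J. card (F \<inter> V j)) = card F"
  shows "F \<subseteq> (\<Union>j\<in>J. V j)"
proof -
  have e: "F \<inter> (\<Union>j\<in>J. V j) = (\<Union>j\<in>J. F \<inter> V j)" by blast
  have ce: "card (\<Union>j\<in>J. F \<inter> V j) = (\<Sum>j\<in>J. card (F \<inter> V j))"
  proof (rule card_UN_disjoint[OF fJ])
    show "\<forall>i\<in>J. finite (F \<inter> V i)" using fF by simp
    show "\<forall>i\<in>J. \<forall>j\<in>J. i \<noteq> j \<longrightarrow> (F \<inter> V i) \<inter> (F \<inter> V j) = {}" using disj by blast
  qed
  have "card (F \<inter> (\<Union>j\<in>J. V j)) = card F" by (simp only: e ce cs)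
  hence "F \<inter> (\<Union>j\<in>J. V j) = F" using fF by (intro card_subset_eq) auto
  thus ?thesis by blast
qed

lemma card_minus_pt:
  assumes fF: "finite F" and u: "u \<in> F" "u \<in> V i0" and i0: "i0 \<in> J" and j: "j \<in> J"
    and disj: "\<forall>i\<in>J. \<forall>j\<in>J. i \<noteq> j \<longrightarrow> V i \<inter> V j = {}"
  shows "card ((F - {u}) \<inter> V j) = card (F \<inter> V j) - (if j = i0 then 1 else 0)"
proof (cases "j = i0")
  case True
  have "(F - {u}) \<inter> V j = (F \<inter> V j) - {u}" by blast
  thus ?thesis using True u fF by simp
next
  case False
  have "u \<notin> V j" using disj False i0 j u(2) by blast
  hence "(F - {u}) \<inter> V j = F \<inter> V j" by blast
  thus ?thesis using False by simp
qed

lemma wit_exists: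
  fixes Vs :: "nat \<Rightarrow> 'a set" and \<alpha> \<beta> :: "nat \<Rightarrow> nat"
  assumes disj: "\<forall>i\<in>{1..d}. \<forall>j\<in>{1..d}. i \<noteq> j \<longrightarrow> Vs i \<inter> Vs j = {}"
    and clo: "\<forall>i\<in>{1..d}. closed VH EH c \<eta> (Vs i)"
    and i0: "i0 \<in> {1..d}" and j0: "j0 \<in> {1..d}"
    and x: "x \<in> Vs i0" and y: "y \<in> Vs j0"
    and cF: "card F = 4" and pF: "\<forall>j\<in>{1..d}. card (F \<inter> Vs j) = \<alpha> j"
    and cG: "card G = 4" and pG: "\<forall>j\<in>{1..d}. card (G \<inter> Vs j) = \<beta> j"
    and sa: "(\<Sum>j=1..d. \<alpha> j) = 4" and sb: "(\<Sum>j=1..d. \<beta> j) = 4"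
    and ai: "\<alpha> i0 \<ge> 1" and bj: "\<beta> j0 \<ge> 1"
    and ab: "\<forall>j\<in>{1..d}. \<beta> j + (if j = i0 then 1 else 0) = \<alpha> j + (if j = j0 then 1 else 0)"
    and FG: "F \<inter> G = {}" and xF: "x \<notin> F \<union> G" and yF: "y \<notin> F \<union> G"
  shows "\<exists>L. fst ` set L = insert x G \<and> snd ` set L = insert y F \<and> distinct (map fst L) \<and>
           distinct (map snd L) \<and> (\<forall>(p,q)\<in>set L. close VH EH c \<eta> p q)"
proof -
  have fF: "finite F" and fG: "finite G" using cF cG by (auto intro: card_ge_0_finite)
  have covF: "F \<subseteq> (\<Union>j\<in>{1..d}. Vs j)"
    by (rule cover[OF fF _ disj]) (use pF sa cF in simp_all)
  have covG: "G \<subseteq> (\<Union>j\<in>{1..d}. Vs j)"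
    by (rule cover[OF fG _ disj]) (use pG sb cG in simp_all)
  have "card (F \<inter> Vs i0) \<noteq> 0" using pF i0 ai by simp
  then obtain u where u: "u \<in> F" "u \<in> Vs i0" by (metis Int_iff all_not_in_conv card.empty)
  have "card (G \<inter> Vs j0) \<noteq> 0" using pG j0 bj by simp
  then obtain w where w: "w \<in> G" "w \<in> Vs j0" by (metis Int_iff all_not_in_conv card.empty)
  define A where "A = F - {u}"
  define B where "B = G - {w}"
  have cards: "\<forall>j\<in>{1..d}. card (A \<inter> Vs j) = card (B \<inter> Vs j)"
  proof
    fix j assume j: "j \<in> {1..d}"
    have a: "card (A \<inter> Vs j) = \<alpha> j - (if j = i0 then 1 else 0)"
      unfolding A_def using card_minus_pt[OF fF u i0 j disj] pF j by simp
    have b: "card (B \<inter> Vs j) = \<beta> j - (if j = j0 then 1 else 0)"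
      unfolding B_def using card_minus_pt[OF fG w j0 j disj] pG j by simp
    have "\<beta> j + (if j = i0 then 1 else 0) = \<alpha> j + (if j = j0 then 1 else 0)" using ab j by blast
    thus "card (A \<inter> Vs j) = card (B \<inter> Vs j)" unfolding a b using ai bj
      by (cases "j = i0"; cases "j = j0") auto
  qed
  obtain h where h: "inj_on h A" "h ` A = B" "\<forall>p\<in>A. \<exists>j\<in>{1..d}. p \<in> Vs j \<and> h p \<in> Vs j"
    using match_exists[where J="{1..d}" and V=Vs and A=A and B=B] fF fG covF covG disj cards unfolding A_def B_def by blast
  obtain xs where xs: "set xs = A" "distinct xs" using finite_distinct_list fF A_def by blast
  define L where "L = (x,u) # (w,y) # map (\<lambda>p. (h p, p)) xs"
  have wG: "insert w B = G" using w B_def by blast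
  have uF: "insert u A = F" using u A_def by blast
  have BG: "B \<subseteq> G" and AF: "A \<subseteq> F" using A_def B_def by blast+
  have clos: "\<And>i a b. i \<in> {1..d} \<Longrightarrow> a \<in> Vs i \<Longrightarrow> b \<in> Vs i \<Longrightarrow> a \<noteq> b \<Longrightarrow> close VH EH c \<eta> a b"
    using clo unfolding closed_def by blast
  have "fst ` set L = insert x G"
  proof -
    have "fst ` set L = insert x (insert w (h ` A))" unfolding L_def using xs by (simp add: image_image)
    thus ?thesis using h(2) wG by simp
  qed
  moreover have "snd ` set L = insert y F"
  proof -
    have "snd ` set L = insert u (insert y A)" unfolding L_def using xs by (simp add: image_image)
    thus ?thesis using uF by blast
  qed
  moreover have "distinct (map fst L)"
  proof -
    have "map fst L = x # w # map h xs" unfolding L_def by simp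
    moreover have "distinct (map h xs)" using xs h(1) by (simp add: distinct_map)
    moreover have "x \<noteq> w" using xF w by blast
    moreover have "x \<notin> set (map h xs)" using xs h(2) BG xF by auto
    moreover have "w \<notin> set (map h xs)" using xs h(2) B_def by auto
    ultimately show ?thesis by simp
  qed
  moreover have "distinct (map snd L)"
  proof -
    have "map snd L = u # y # xs" unfolding L_def by (simp add: comp_def)
    moreover have "u \<noteq> y" using yF u by blast
    moreover have "u \<notin> set xs" using xs A_def by auto
    moreover have "y \<notin> set xs" using xs AF yF by auto
    ultimately show ?thesis using xs by simp
  qed
  moreover have "\<forall>(p,q)\<in>set L. close VH EH c \<eta> p q"
  proof
    fix pq assume pq: "pq \<in> set L"
    show "case pq of (p, q) \<Rightarrow> close VH EH c \<eta> p q"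
    proof (cases "pq = (x,u)")
      case True
      have "x \<noteq> u" using xF u by blast
      thus ?thesis using True clos[OF i0 x u(2)] by simp
    next
      case F1: False
      show ?thesis
      proof (cases "pq = (w,y)")
        case True
        have "w \<noteq> y" using yF w by blast
        thus ?thesis using True clos[OF j0 w(2) y] by simp
      next
        case False
        then obtain p where p: "p \<in> set xs" "pq = (h p, p)" using pq F1 unfolding L_def by auto
        have pA: "p \<in> A" using p xs by simp
        then obtain j where j: "j \<in> {1..d}" "p \<in> Vs j" "h p \<in> Vs j" using h(3) by blast
        have hpG: "h p \<in> G" using pA h(2) BG by blast
        have "p \<in> F" using pA AF by blast
        hence "p \<notin> G" using FG by blast
        hence "h p \<noteq> p" using hpG by metis
        thus ?thesis using p clos[OF j(1) j(3) j(2)] by simp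
      qed
    qed
  qed
  ultimately show ?thesis by blast
qed


lemma core:
  fixes VH :: "'a set" and \<FF>a \<FF>b :: "'a set set" and \<epsilon> \<kappa> :: real
  assumes fin: "finite VH" and c: "c \<ge> 1" and eps: "\<epsilon> > 0" and kap: "\<kappa> > 0"
    and nbig: "12 / \<epsilon> \<le> real (card VH)"
    and famb: "\<And>Z L. finite Z \<Longrightarrow> card Z \<le> 10 \<Longrightarrow> length L = 5 \<Longrightarrow>
        (\<forall>(p,q)\<in>set L. close VH EH c \<eta> p q) \<Longrightarrow> fst ` set L \<union> snd ` set L \<subseteq> Z \<Longrightarrow>
        distinct (map fst L) \<Longrightarrow> distinct (map snd L) \<Longrightarrow>
        \<kappa> * real (card VH) ^ (5 * (4*c-1)) \<le> real (card (fam VH EH c Z L))"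
    and Fa: "\<And>F. F \<in> \<FF>a \<Longrightarrow> K4m_copy VH EH F" and Fb: "\<And>F. F \<in> \<FF>b \<Longrightarrow> K4m_copy VH EH F"
    and ca: "\<epsilon> * real (card VH) ^ 4 \<le> real (card \<FF>a)"
    and cb: "\<epsilon> * real (card VH) ^ 4 \<le> real (card \<FF>b)"
    and wit: "\<And>F G. F \<in> \<FF>a \<Longrightarrow> G \<in> \<FF>b \<Longrightarrow> F \<inter> G = {} \<Longrightarrow> x \<notin> F \<union> G \<Longrightarrow> y \<notin> F \<union> G \<Longrightarrow>
       (\<exists>L. fst ` set L = insert x G \<and> snd ` set L = insert y F \<and> distinct (map fst L) \<and>
           distinct (map snd L) \<and> (\<forall>(p,q)\<in>set L. close VH EH c \<eta> p q))"
  shows "(\<epsilon>/2)^2 / real ((4+4) choose 4) * \<kappa> / real ((8 + 5*(4*c-1)) choose 8) * real (card VH) ^ (20*c+3)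
      \<le> real (card {S. connector VH EH (5*c+1) x y S})"
proof -
  define n where "n = card VH"
  have n0: "real n \<ge> 0" by simp
  have fs: "\<And>X. X \<subseteq> VH \<Longrightarrow> finite X" using fin by (rule rev_finite_subset)
  have K4: "\<And>F. K4m_copy VH EH F \<Longrightarrow> F \<subseteq> VH \<and> card F = 4 \<and> finite F"
    using fs unfolding K4m_copy_def by blast
  define \<AA> where "\<AA> = {F\<in>\<FF>a. F \<inter> {x,y} = {}}"
  define \<BB> where "\<BB> F = {G\<in>\<FF>b. G \<inter> (F \<union> {x,y}) = {}}" for F
  define \<EE> where "\<EE> = {A \<union> B | A B. A \<in> \<AA> \<and> B \<in> \<BB> A}"
  have big: "\<And>w::nat. w \<le> 6 \<Longrightarrow> real w * real n ^ 3 \<le> \<epsilon>/2 * real n ^ 4"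
  proof -
    fix w :: nat assume w: "w \<le> 6"
    have "real w \<le> 6" using w by simp
    also have "6 \<le> \<epsilon>/2 * real n" using nbig eps unfolding n_def by (simp add: field_simps)
    finally have "real w * real n ^ 3 \<le> (\<epsilon>/2 * real n) * real n ^ 3" by (rule mult_right_mono) simp
    thus "real w * real n ^ 3 \<le> \<epsilon>/2 * real n ^ 4" by (simp add: power_eq_if algebra_simps)
  qed
  have subA: "\<FF>a \<subseteq> {C. C \<subseteq> VH \<and> card C = 4}" using Fa K4 by blast
  have subB: "\<FF>b \<subseteq> {C. C \<subseteq> VH \<and> card C = 4}" using Fb K4 by blast
  have cA: "\<epsilon>/2 * real n ^ 4 \<le> real (card \<AA>)"
  proof -
    have "real (card \<FF>a) - real (card {x,y}) * real n ^ (4 - 1) \<le> real (card \<AA>)"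
      unfolding \<AA>_def n_def by (rule avoid_count[OF fin subA]) auto
    moreover have "real (card {x,y}) * real n ^ 3 \<le> \<epsilon>/2 * real n ^ 4"
      by (rule big) (simp add: card_insert_if)
    ultimately show ?thesis using ca unfolding n_def by simp
  qed
  have cB: "\<epsilon>/2 * real n ^ 4 \<le> real (card (\<BB> F))" if F: "F \<in> \<AA>" for F
  proof -
    have fF: "finite F" "card F = 4" using F Fa K4 unfolding \<AA>_def by auto
    have "real (card \<FF>b) - real (card (F \<union> {x,y})) * real n ^ (4 - 1) \<le> real (card (\<BB> F))"
      unfolding \<BB>_def n_def by (rule avoid_count[OF fin subB]) (use fF in auto)
    moreover have "real (card (F \<union> {x,y})) * real n ^ 3 \<le> \<epsilon>/2 * real n ^ 4"
    proof (rule big)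
      have "card (F \<union> {x,y}) \<le> card F + card {x,y}" by (rule card_Un_le)
      also have "card {x,y} \<le> 2" by (simp add: card_insert_if)
      finally show "card (F \<union> {x,y}) \<le> 6" using fF by simp
    qed
    ultimately show ?thesis using cb unfolding n_def by simp
  qed
  have finAA: "finite \<AA>"
  proof -
    have "\<AA> \<subseteq> Pow VH" using subA unfolding \<AA>_def by blast
    thus ?thesis by (rule finite_subset) (simp add: fin)
  qed
  have cE: "real (card \<AA>) * (\<epsilon>/2 * real n ^ 4) \<le> real (card \<EE>) * real ((4+4) choose 4)"
    unfolding \<EE>_def
  proof (rule ext_count[OF finAA])
    fix A assume "A \<in> \<AA>" thus "card A = 4 \<and> finite A" using Fa K4 unfolding \<AA>_def by blast
  next
    fix A assume "A \<in> \<AA>"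
    have "\<BB> A \<subseteq> Pow VH" using subB unfolding \<BB>_def by blast
    thus "finite (\<BB> A)" by (rule finite_subset) (simp add: fin)
  next
    fix A B assume "A \<in> \<AA>" "B \<in> \<BB> A"
    thus "A \<inter> B = {} \<and> card B = 4 \<and> finite B" using Fb K4 unfolding \<BB>_def by blast
  next
    fix A assume "A \<in> \<AA>" thus "\<epsilon>/2 * real n ^ 4 \<le> real (card (\<BB> A))" by (rule cB)
  qed
  have cE2: "(\<epsilon>/2 * real n ^ 4) * (\<epsilon>/2 * real n ^ 4) \<le> real (card \<EE>) * real ((4+4) choose 4)"
  proof -
    have nn: "0 \<le> \<epsilon>/2 * real n ^ 4" using eps by simp
    have "(\<epsilon>/2 * real n ^ 4) * (\<epsilon>/2 * real n ^ 4) \<le> real (card \<AA>) * (\<epsilon>/2 * real n ^ 4)"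
      by (rule mult_right_mono[OF cA nn])
    with cE show ?thesis by linarith
  qed
  define \<DD> where "\<DD> E = {D. \<exists>F G L. E = F \<union> G \<and> F \<in> \<AA> \<and> G \<in> \<BB> F \<and> fst ` set L = insert x G \<and>
       snd ` set L = insert y F \<and> distinct (map fst L) \<and> distinct (map snd L) \<and>
       (\<forall>(p,q)\<in>set L. close VH EH c \<eta> p q) \<and> D \<in> fam VH EH c (E \<union> {x,y}) L}" for E
  have lenL: "length L = 5" if "fst ` set L = insert x G" "distinct (map fst L)" "card G = 4" "x \<notin> G" for L G
  proof -
    have "length L = card (set (map fst L))" using distinct_card[OF that(2)] by simp
    also have "\<dots> = card (insert x G)" using that(1) by simp
    also have "\<dots> = 5" using that(3,4) card_ge_0_finite[of G] by simp
    finally show ?thesis .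
  qed
  have finE: "finite \<EE>"
  proof -
    have "\<EE> \<subseteq> Pow VH" using subA subB unfolding \<EE>_def \<AA>_def \<BB>_def by blast
    thus ?thesis by (rule finite_subset) (simp add: fin)
  qed
  have cS: "real (card \<EE>) * (\<kappa> * real n ^ (5 * (4*c-1)))
      \<le> real (card {E \<union> D | E D. E \<in> \<EE> \<and> D \<in> \<DD> E}) * real ((8 + 5*(4*c-1)) choose 8)"
  proof (rule ext_count[OF finE])
    fix E assume "E \<in> \<EE>"
    then obtain F G where E: "E = F \<union> G" "F \<in> \<AA>" "G \<in> \<BB> F" unfolding \<EE>_def by blast
    have "card F = 4" "finite F" "card G = 4" "finite G" "F \<inter> G = {}"
      using E Fa Fb K4 unfolding \<AA>_def \<BB>_def by auto
    thus "card E = 8 \<and> finite E" using E(1) by (simp add: card_Un_disjoint)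
  next
    fix E assume "E \<in> \<EE>"
    have "\<DD> E \<subseteq> Pow VH" unfolding \<DD>_def fam_def by blast
    thus "finite (\<DD> E)" by (rule finite_subset) (simp add: fin)
  next
    fix E D assume E: "E \<in> \<EE>" and D: "D \<in> \<DD> E"
    then obtain F G L where FGL: "E = F \<union> G" "F \<in> \<AA>" "G \<in> \<BB> F" "fst ` set L = insert x G"
       "distinct (map fst L)" "D \<in> fam VH EH c (E \<union> {x,y}) L" unfolding \<DD>_def by blast
    have G4: "card G = 4" "x \<notin> G" using FGL(3) Fb K4 unfolding \<BB>_def by auto
    have "length L = 5" by (rule lenL[OF FGL(4,5) G4])
    thus "E \<inter> D = {} \<and> card D = 5 * (4*c-1) \<and> finite D" using FGL(6) fs unfolding fam_def by auto
  next
    fix E assume "E \<in> \<EE>"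
    then obtain F G where E: "E = F \<union> G" "F \<in> \<AA>" "G \<in> \<BB> F" unfolding \<EE>_def by blast
    have FG: "F \<inter> G = {}" "x \<notin> F \<union> G" "y \<notin> F \<union> G" using E unfolding \<AA>_def \<BB>_def by auto
    have FaF: "F \<in> \<FF>a" and FbG: "G \<in> \<FF>b" using E unfolding \<AA>_def \<BB>_def by auto
    obtain L where L: "fst ` set L = insert x G" "snd ` set L = insert y F" "distinct (map fst L)"
       "distinct (map snd L)" "\<forall>(p,q)\<in>set L. close VH EH c \<eta> p q"
      using wit[OF FaF FbG FG] by blast
    have F4: "card F = 4" "finite F" "card G = 4" "finite G" using FaF FbG Fa Fb K4 by auto
    have l5: "length L = 5" by (rule lenL[OF L(1,3) F4(3)]) (use FG in blast)
    have "\<kappa> * real (card VH) ^ (5 * (4*c-1)) \<le> real (card (fam VH EH c (E \<union> {x,y}) L))"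
    proof (rule famb[OF _ _ l5 L(5) _ L(3,4)])
      show "finite (E \<union> {x,y})" using E(1) F4 by simp
      have "card (E \<union> {x,y}) \<le> card E + card {x,y}" by (rule card_Un_le)
      also have "card E \<le> card F + card G" unfolding E(1) by (rule card_Un_le)
      also have "card {x,y} \<le> 2" by (simp add: card_insert_if)
      finally show "card (E \<union> {x,y}) \<le> 10" using F4 by simp
      show "fst ` set L \<union> snd ` set L \<subseteq> E \<union> {x,y}" using L(1,2) E(1) by blast
    qed
    moreover have "fam VH EH c (E \<union> {x,y}) L \<subseteq> \<DD> E"
      unfolding \<DD>_def using E L by blast
    moreover have "finite (\<DD> E)"
    proof -
      have "\<DD> E \<subseteq> Pow VH" unfolding \<DD>_def fam_def by blast
      thus ?thesis by (rule finite_subset) (simp add: fin)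
    qed
    ultimately show "\<kappa> * real n ^ (5 * (4*c-1)) \<le> real (card (\<DD> E))" unfolding n_def
      by (meson card_mono of_nat_le_iff order_trans)
  qed
  have sub: "{E \<union> D | E D. E \<in> \<EE> \<and> D \<in> \<DD> E} \<subseteq> {S. connector VH EH (5*c+1) x y S}"
  proof
    fix S assume "S \<in> {E \<union> D | E D. E \<in> \<EE> \<and> D \<in> \<DD> E}"
    then obtain E D where S: "S = E \<union> D" and DE: "D \<in> \<DD> E" by blast
    then obtain F G L where FGL: "E = F \<union> G" "F \<in> \<AA>" "G \<in> \<BB> F" "fst ` set L = insert x G"
       "snd ` set L = insert y F" "distinct (map fst L)" "D \<in> fam VH EH c (E \<union> {x,y}) L" unfolding \<DD>_def by blast
    have FaF: "F \<in> \<FF>a" and FbG: "G \<in> \<FF>b" using FGL unfolding \<AA>_def \<BB>_def by auto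
    have FG: "F \<inter> G = {}" "x \<notin> F \<union> G" "y \<notin> F \<union> G" using FGL(2,3) unfolding \<AA>_def \<BB>_def by auto
    have F4: "card F = 4" "finite F" "card G = 4" "finite G" "F \<subseteq> VH" "G \<subseteq> VH" using FaF FbG Fa Fb K4 by auto
    have l5: "length L = 5" by (rule lenL[OF FGL(4,6) F4(3)]) (use FG in blast)
    have Dp: "D \<subseteq> VH" "D \<inter> (E \<union> {x,y}) = {}" "card D = 5 * (4*c-1)"
        "has_K4m_factor VH EH (D \<union> insert x G)" "has_K4m_factor VH EH (D \<union> insert y F)"
      using FGL(7) l5 FGL(4,5) unfolding fam_def by auto
    have fD: "finite D" using Dp(1) fs by blast
    have cE8: "card E = 8" using FGL(1) F4 FG(1) by (simp add: card_Un_disjoint)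
    have "card S = 8 + 5 * (4*c-1)" unfolding S using Dp(2,3) cE8 fD F4 FGL(1)
      by (subst card_Un_disjoint) auto
    also have "\<dots> = 4 * (5*c+1) - 1" using c by simp
    finally have cS: "card S = 4 * (5*c+1) - 1" .
    have hx: "has_K4m_factor VH EH (insert x S)"
    proof -
      have "insert x S = F \<union> (D \<union> insert x G)" unfolding S FGL(1) by blast
      moreover have "has_K4m_factor VH EH (F \<union> (D \<union> insert x G))"
        by (rule hf_union[OF hf_single[OF Fa[OF FaF]] Dp(4)]) (use FG Dp(2) FGL(1) in blast)
      ultimately show ?thesis by simp
    qed
    have hy: "has_K4m_factor VH EH (insert y S)"
    proof -
      have "insert y S = G \<union> (D \<union> insert y F)" unfolding S FGL(1) by blast
      moreover have "has_K4m_factor VH EH (G \<union> (D \<union> insert y F))"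
        by (rule hf_union[OF hf_single[OF Fb[OF FbG]] Dp(5)]) (use FG Dp(2) FGL(1) in blast)
      ultimately show ?thesis by simp
    qed
    have "S \<subseteq> VH" unfolding S FGL(1) using F4 Dp(1) by blast
    moreover have "x \<notin> S" "y \<notin> S" unfolding S using FG Dp(2) FGL(1) by blast+
    ultimately show "S \<in> {S. connector VH EH (5*c+1) x y S}" unfolding connector_def using cS hx hy by simp
  qed
  have finC: "finite {S. connector VH EH (5*c+1) x y S}"
  proof -
    have "{S. connector VH EH (5*c+1) x y S} \<subseteq> Pow VH" unfolding connector_def by blast
    thus ?thesis by (rule finite_subset) (simp add: fin)
  qed
  define C1 where "C1 = real ((4+4) choose 4)"
  define C2 where "C2 = real ((8 + 5*(4*c-1)) choose 8)"
  have C1p: "C1 > 0" unfolding C1_def by simp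
  have C2p: "C2 > 0" unfolding C2_def by simp
  define M where "M = real (card {S. connector VH EH (5*c+1) x y S})"
  have cS': "real (card \<EE>) * (\<kappa> * real n ^ (5 * (4*c-1))) \<le> M * C2"
  proof -
    have "card {E \<union> D | E D. E \<in> \<EE> \<and> D \<in> \<DD> E} \<le> card {S. connector VH EH (5*c+1) x y S}"
      by (rule card_mono[OF finC sub])
    hence "real (card {E \<union> D | E D. E \<in> \<EE> \<and> D \<in> \<DD> E}) * C2 \<le> M * C2"
      unfolding M_def using C2p by (intro mult_right_mono) auto
    thus ?thesis using cS unfolding C2_def by linarith
  qed
  have e1: "(\<epsilon>/2)^2 * real n ^ 8 / C1 \<le> real (card \<EE>)"
    using cE2 C1p by (simp add: C1_def field_simps power2_eq_square power_add[symmetric])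
  have kn: "\<kappa> * real n ^ (5 * (4*c-1)) \<ge> 0" using kap by simp
  have ineq: "(\<epsilon>/2)^2 * real n ^ 8 / C1 * (\<kappa> * real n ^ (5 * (4*c-1))) \<le> M * C2"
    using mult_right_mono[OF e1 kn] cS' by linarith
  have eq: "real n ^ 8 * real n ^ (5 * (4*c-1)) = real n ^ (20*c+3)"
  proof -
    have "8 + 5 * (4*c-1) = 20*c+3" using c by simp
    thus ?thesis by (metis power_add)
  qed
  have "(\<epsilon>/2)^2 * real n ^ 8 / C1 * (\<kappa> * real n ^ (5 * (4*c-1))) =
        (\<epsilon>/2)^2 / C1 * \<kappa> * (real n ^ 8 * real n ^ (5 * (4*c-1)))"
    by (simp add: field_simps)
  note rw = this[unfolded eq]
  have "(\<epsilon>/2)^2 / C1 * \<kappa> * real n ^ (20*c+3) \<le> M * C2"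
    using ineq unfolding rw .
  hence A: "(\<epsilon>/2)^2 / C1 * \<kappa> * real n ^ (20*c+3) / C2 \<le> M"
    by (subst pos_divide_le_eq[OF C2p])
  have B: "(\<epsilon>/2)^2 / C1 * \<kappa> / C2 * real n ^ (20*c+3) = (\<epsilon>/2)^2 / C1 * \<kappa> * real n ^ (20*c+3) / C2"
    by (rule times_divide_eq_left)
  have "(\<epsilon>/2)^2 / C1 * \<kappa> / C2 * real n ^ (20*c+3) \<le> M" unfolding B by (rule A)
  thus ?thesis unfolding C1_def C2_def M_def n_def .
qed


lemma pair_case:
  fixes VH :: "'a set" and \<FF>a \<FF>b :: "'a set set" and \<epsilon> \<kappa> :: real and Vs :: "nat \<Rightarrow> 'a set"
  assumes fin: "finite VH" and c: "c \<ge> 1" and eps: "\<epsilon> > 0" and kap: "\<kappa> > 0"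
    and nbig: "12 / \<epsilon> \<le> real (card VH)"
    and famb: "\<And>Z L. finite Z \<Longrightarrow> card Z \<le> 10 \<Longrightarrow> length L = 5 \<Longrightarrow>
        (\<forall>(p,q)\<in>set L. close VH EH c \<eta> p q) \<Longrightarrow> fst ` set L \<union> snd ` set L \<subseteq> Z \<Longrightarrow>
        distinct (map fst L) \<Longrightarrow> distinct (map snd L) \<Longrightarrow>
        \<kappa> * real (card VH) ^ (5 * (4*c-1)) \<le> real (card (fam VH EH c Z L))"
    and Fa: "\<And>F. F \<in> \<FF>a \<Longrightarrow> K4m_copy VH EH F \<and> (\<forall>j\<in>{1..d}. card (F \<inter> Vs j) = \<alpha> j)"
    and Fb: "\<And>F. F \<in> \<FF>b \<Longrightarrow> K4m_copy VH EH F \<and> (\<forall>j\<in>{1..d}. card (F \<inter> Vs j) = \<beta> j)"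
    and ca: "\<epsilon> * real (card VH) ^ 4 \<le> real (card \<FF>a)"
    and cb: "\<epsilon> * real (card VH) ^ 4 \<le> real (card \<FF>b)"
    and disj: "\<forall>i\<in>{1..d}. \<forall>j\<in>{1..d}. i \<noteq> j \<longrightarrow> Vs i \<inter> Vs j = {}"
    and clo: "\<forall>i\<in>{1..d}. closed VH EH c \<eta> (Vs i)"
    and i0: "i0 \<in> {1..d}" and j0: "j0 \<in> {1..d}"
    and x: "x \<in> Vs i0" and y: "y \<in> Vs j0"
    and sa: "(\<Sum>j=1..d. \<alpha> j) = 4" and sb: "(\<Sum>j=1..d. \<beta> j) = 4"
    and ai: "\<alpha> i0 \<ge> 1" and bj: "\<beta> j0 \<ge> 1"
    and ab: "\<forall>j\<in>{1..d}. \<beta> j + (if j = i0 then 1 else 0) = \<alpha> j + (if j = j0 then 1 else 0)"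
  shows "(\<epsilon>/2)^2 / real ((4+4) choose 4) * \<kappa> / real ((8 + 5*(4*c-1)) choose 8) * real (card VH) ^ (20*c+3)
      \<le> real (card {S. connector VH EH (5*c+1) x y S})"
proof (rule core[OF fin c eps kap nbig famb _ _ ca cb])
  fix F assume "F \<in> \<FF>a" thus "K4m_copy VH EH F" using Fa by blast
next
  fix F assume "F \<in> \<FF>b" thus "K4m_copy VH EH F" using Fb by blast
next
  fix F G assume F: "F \<in> \<FF>a" and G: "G \<in> \<FF>b" and FG: "F \<inter> G = {}" and xF: "x \<notin> F \<union> G" and yF: "y \<notin> F \<union> G"
  have cF: "card F = 4" "\<forall>j\<in>{1..d}. card (F \<inter> Vs j) = \<alpha> j" using Fa[OF F] unfolding K4m_copy_def by blast+
  have cG: "card G = 4" "\<forall>j\<in>{1..d}. card (G \<inter> Vs j) = \<beta> j" using Fb[OF G] unfolding K4m_copy_def by blast+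
  show "\<exists>L. fst ` set L = insert x G \<and> snd ` set L = insert y F \<and> distinct (map fst L) \<and>
           distinct (map snd L) \<and> (\<forall>(p,q)\<in>set L. close VH EH c \<eta> p q)"
    by (rule wit_exists[OF disj clo i0 j0 x y cF cG sa sb ai bj ab FG xF yF])
qed (assumption+)

lemma main_inst:
  fixes VH :: "nat set" and Vs :: "nat \<Rightarrow> nat set" and a :: "nat \<Rightarrow> nat" and \<epsilon> \<eta> \<kappa> :: real
  assumes kp: "\<kappa> > 0"
    and famN: "\<forall>(VH::nat set) EH Z L. finite VH \<and> card VH \<ge> N \<and> length L = 5 \<and> finite Z \<and> card Z \<le> 10 \<and>
     (\<forall>(p,q)\<in>set L. close VH EH c \<eta> p q) \<and> fst ` set L \<union> snd ` set L \<subseteq> Z \<and>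
     distinct (map fst L) \<and> distinct (map snd L) \<longrightarrow>
     \<kappa> * real (card VH) ^ (5 * (4*c-1)) \<le> real (card (fam VH EH c Z L))"
    and c: "c \<ge> 1" and eta: "\<eta> > 0" and eps: "\<epsilon> > 0"
    and g3: "three_graph VH EH" and cn: "card VH = n" and d2: "2 \<le> d" and d4: "d \<le> 4"
    and Vcl: "\<forall>i\<in>{1..d}. Vs i \<subseteq> VH \<and> closed VH EH c \<eta> (Vs i)"
    and disj: "\<forall>i\<in>{1..d}. \<forall>j\<in>{1..d}. i \<noteq> j \<longrightarrow> Vs i \<inter> Vs j = {}"
    and a1: "a 1 \<ge> 1" and sa: "(\<Sum>i=1..d. a i) = 4"
    and c1: "real (card {F. K4m_copy VH EH F \<and> (\<forall>i\<in>{1..d}. card (F \<inter> Vs i) = a i)}) \<ge> \<epsilon> * real n ^ 4"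
    and c2: "real (card {F. K4m_copy VH EH F \<and> card (F \<inter> Vs 1) = a 1 - 1 \<and> card (F \<inter> Vs 2) = a 2 + 1 \<and>
                     (\<forall>j\<in>{3..d}. card (F \<inter> Vs j) = a j)}) \<ge> \<epsilon> * real n ^ 4"
    and nN: "N \<le> n" and nb: "nat \<lceil>12 / \<epsilon>\<rceil> \<le> n"
  shows "closed VH EH (5 * c + 1) ((\<epsilon>/2)^2 / real ((4+4) choose 4) * \<kappa> / real ((8 + 5*(4*c-1)) choose 8)) (Vs 1 \<union> Vs 2)"
proof -
  let ?\<eta>' = "(\<epsilon>/2)^2 / real ((4+4) choose 4) * \<kappa> / real ((8 + 5*(4*c-1)) choose 8)"
  have fin: "finite VH" using g3 unfolding three_graph_def by blast
  have nbig: "12 / \<epsilon> \<le> real (card VH)" using nb cn by linarith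
  have famb: "\<kappa> * real (card VH) ^ (5 * (4*c-1)) \<le> real (card (fam VH EH c Z L))"
    if "finite Z" "card Z \<le> 10" "length L = 5" "\<forall>(p,q)\<in>set L. close VH EH c \<eta> p q"
       "fst ` set L \<union> snd ` set L \<subseteq> Z" "distinct (map fst L)" "distinct (map snd L)" for Z L
  proof -
    have "finite VH \<and> card VH \<ge> N \<and> length L = 5 \<and> finite Z \<and> card Z \<le> 10 \<and>
     (\<forall>(p,q)\<in>set L. close VH EH c \<eta> p q) \<and> fst ` set L \<union> snd ` set L \<subseteq> Z \<and>
     distinct (map fst L) \<and> distinct (map snd L)"
      using fin nN cn that by (intro conjI) simp_all
    thus ?thesis by (rule famN[rule_format])
  qed
  have one: "1 \<in> {1..d}" and two: "2 \<in> {1..d}" using d2 by auto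
  have clo: "\<forall>i\<in>{1..d}. closed VH EH c \<eta> (Vs i)" using Vcl by blast
  define P where "P = {F. K4m_copy VH EH F \<and> (\<forall>i\<in>{1..d}. card (F \<inter> Vs i) = a i)}"
  define P' where "P' = {F. K4m_copy VH EH F \<and> card (F \<inter> Vs 1) = a 1 - 1 \<and> card (F \<inter> Vs 2) = a 2 + 1 \<and>
                     (\<forall>j\<in>{3..d}. card (F \<inter> Vs j) = a j)}"
  define a' where "a' = a(1 := a 1 - 1, 2 := a 2 + 1)"
  have PF: "K4m_copy VH EH F \<and> (\<forall>j\<in>{1..d}. card (F \<inter> Vs j) = a j)" if "F \<in> P" for F
    using that unfolding P_def by blast
  have P'F: "K4m_copy VH EH F \<and> (\<forall>j\<in>{1..d}. card (F \<inter> Vs j) = a' j)" if "F \<in> P'" for F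
  proof -
    have h: "K4m_copy VH EH F" "card (F \<inter> Vs 1) = a 1 - 1" "card (F \<inter> Vs 2) = a 2 + 1"
      "\<forall>j\<in>{3..d}. card (F \<inter> Vs j) = a j" using that unfolding P'_def by blast+
    have "\<forall>j\<in>{1..d}. card (F \<inter> Vs j) = a' j"
    proof
      fix j assume j: "j \<in> {1..d}"
      show "card (F \<inter> Vs j) = a' j"
      proof (cases "j = 1")
        case True thus ?thesis using h unfolding a'_def by simp
      next
        case F1: False
        show ?thesis
        proof (cases "j = 2")
          case True thus ?thesis using h unfolding a'_def by simp
        next
          case False
          hence "j \<in> {3..d}" using F1 j by auto
          thus ?thesis using h F1 False unfolding a'_def by simp
        qed
      qed
    qed
    thus ?thesis using h by blast
  qed
  have rel: "\<forall>j\<in>{1..d}. a' j + (if j = 1 then 1 else 0) = a j + (if j = 2 then 1 else 0)"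
    using a1 unfolding a'_def by auto
  have sa': "(\<Sum>j=1..d. a' j) = 4"
  proof -
    have "(\<Sum>j=1..d. a' j + (if j = 1 then 1 else 0)) = (\<Sum>j=1..d. a j + (if j = 2 then 1 else (0::nat)))"
      using rel by (intro sum.cong) auto
    hence "(\<Sum>j=1..d. a' j) + (\<Sum>j=1..d. if j = 1 then 1 else (0::nat)) = (\<Sum>j=1..d. a j) + (\<Sum>j=1..d. if j = 2 then 1 else (0::nat))"
      by (simp only: sum.distrib)
    moreover have "(\<Sum>j=1..d. if j = 1 then 1 else (0::nat)) = 1" using one by (simp add: sum.delta)
    moreover have "(\<Sum>j=1..d. if j = 2 then 1 else (0::nat)) = 1" using two by (simp add: sum.delta)
    ultimately show ?thesis using sa by simp
  qed
  have a'2: "a' 2 \<ge> 1" unfolding a'_def by simp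
  have cP: "\<epsilon> * real (card VH) ^ 4 \<le> real (card P)" using c1 cn unfolding P_def by simp
  have cP': "\<epsilon> * real (card VH) ^ 4 \<le> real (card P')" using c2 cn unfolding P'_def by simp
  note base = fin c eps kp nbig famb
  have rel1: "\<forall>j\<in>{1..d}. a j + (if j = 1 then 1 else 0) = a j + (if j = 1 then 1 else (0::nat))" by simp
  have rel2: "\<forall>j\<in>{1..d}. a' j + (if j = 2 then 1 else 0) = a' j + (if j = 2 then 1 else (0::nat))" by simp
  show ?thesis unfolding closed_def
  proof (intro ballI impI)
    fix x y assume x: "x \<in> Vs 1 \<union> Vs 2" and y: "y \<in> Vs 1 \<union> Vs 2" and xy: "x \<noteq> y"
    have "?\<eta>' * real (card VH) ^ (20*c+3) \<le> real (card {S. connector VH EH (5*c+1) x y S})"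
    proof (cases "x \<in> Vs 1")
      case x1: True
      show ?thesis
      proof (cases "y \<in> Vs 1")
        case True
        show ?thesis
          by (rule pair_case[OF base PF PF cP cP disj clo one one x1 True sa sa a1 a1 rel1])
      next
        case False
        hence y2: "y \<in> Vs 2" using y by blast
        show ?thesis
          by (rule pair_case[OF base PF P'F cP cP' disj clo one two x1 y2 sa sa' a1 a'2 rel])
      qed
    next
      case False
      hence x2: "x \<in> Vs 2" using x by blast
      show ?thesis
      proof (cases "y \<in> Vs 1")
        case True
        have rel': "\<forall>j\<in>{1..d}. a j + (if j = 2 then 1 else 0) = a' j + (if j = 1 then 1 else 0)"
          using rel by simp
        show ?thesis
          by (rule pair_case[OF base P'F PF cP' cP disj clo two one x2 True sa' sa a'2 a1 rel'])
      next
        case False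
        hence y2: "y \<in> Vs 2" using y by blast
        show ?thesis
          by (rule pair_case[OF base P'F P'F cP' cP' disj clo two two x2 y2 sa' sa' a'2 a'2 rel2])
      qed
    qed
    moreover have eq4: "4 * (5 * c + 1) - 1 = 20*c+3" by simp
    ultimately show "close VH EH (5 * c + 1) ?\<eta>' x y" unfolding close_def eq4 by simp
  qed
qed

theorem lemma5p4:
  fixes \<eta> \<epsilon> :: real and c :: nat
  assumes "\<eta> > 0" and "\<epsilon> > 0" and "c \<ge> 1"
  shows "\<exists>\<eta>'>0. \<exists>n0::nat. \<forall>n\<ge>n0. \<forall>(VH :: nat set) EH (Vs :: nat \<Rightarrow> nat set) (d :: nat) (a :: nat \<Rightarrow> nat).
     three_graph VH EH \<and> card VH = n \<and>
     2 \<le> d \<and> d \<le> 4 \<and>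
     (\<forall>i\<in>{1..d}. Vs i \<subseteq> VH \<and> closed VH EH c \<eta> (Vs i)) \<and>
     (\<forall>i\<in>{1..d}. \<forall>j\<in>{1..d}. i \<noteq> j \<longrightarrow> Vs i \<inter> Vs j = {}) \<and>
     a 1 \<ge> 1 \<and> (\<Sum>i=1..d. a i) = 4 \<and>
     real (card {F. K4m_copy VH EH F \<and> (\<forall>i\<in>{1..d}. card (F \<inter> Vs i) = a i)}) \<ge> \<epsilon> * real n ^ 4 \<and>
     real (card {F. K4m_copy VH EH F \<and> card (F \<inter> Vs 1) = a 1 - 1 \<and> card (F \<inter> Vs 2) = a 2 + 1 \<and>
                     (\<forall>j\<in>{3..d}. card (F \<inter> Vs j) = a j)}) \<ge> \<epsilon> * real n ^ 4
     \<longrightarrow> closed VH EH (5 * c + 1) \<eta>' (Vs 1 \<union> Vs 2)"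
proof -
  define famP where "famP \<kappa> N \<longleftrightarrow> (\<forall>(VH::nat set) EH Z L. finite VH \<and> card VH \<ge> N \<and> length L = 5 \<and> finite Z \<and> card Z \<le> 10 \<and>
     (\<forall>(p,q)\<in>set L. close VH EH c \<eta> p q) \<and> fst ` set L \<union> snd ` set L \<subseteq> Z \<and>
     distinct (map fst L) \<and> distinct (map snd L) \<longrightarrow>
     \<kappa> * real (card VH) ^ (5 * (4*c-1)) \<le> real (card (fam VH EH c Z L)))" for \<kappa> N
  have ex: "\<exists>\<kappa>>0. \<exists>N::nat. famP \<kappa> N"
    unfolding famP_def by (rule fam_count[OF assms(1) assms(3)])
  then obtain \<kappa> N where kp: "\<kappa> > 0" and fP: "famP \<kappa> N" by blast
  note famN = fP[unfolded famP_def]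
  have pos: "(\<epsilon>/2)^2 / real ((4+4) choose 4) * \<kappa> / real ((8 + 5*(4*c-1)) choose 8) > 0"
    using assms(2) kp by simp
  show ?thesis
    apply (rule exI[of _ "(\<epsilon>/2)^2 / real ((4+4) choose 4) * \<kappa> / real ((8 + 5*(4*c-1)) choose 8)"])
    apply (rule conjI[OF pos])
    apply (rule exI[of _ "max N (nat \<lceil>12 / \<epsilon>\<rceil>)"])
    apply (intro allI impI)
    apply (elim conjE)
    apply (rule main_inst[OF kp famN assms(3) assms(1) assms(2)])
    apply assumption+
    apply simp_all
    done
qed


end
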